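(* For every $n\ge 0$, the derivation $u_{\delta_{2n}}$ belongs to $\mathfrak{krv}$, where $\delta_{2n}=\Theta(x\otimes\operatorname{ad}_y^{\,2n}(x))$.
   Context: $A=\mathbb{R}\langle x,y\rangle$; $L\subset A$ the free Lie algebra on $x,y$; $\operatorname{ad}_y(l)=[y,l]$. $\operatorname{tr}$ is the projection $A\to A/\operatorname{span}\{ab-ba\}$. $F(L)$ is the quotient of $L\otimes L$ by the span of $a\otimes b-b\otimes a$ and $a\otimes[b,c]-[a,b]\otimes c$, with projection $\Theta$, regarded inside $A/\operatorname{span}\{ab-ba\}$ via $\Theta(a\otimes b)\mapsto\operatorname{tr}(ab)$. For $x_0\in\{x,y\}$, $\partial_{x_0}$ maps cyclic words by $\operatorname{tr}(a_1\cdots a_n)\mapsto\sum_{i:\,a_i=x_0}a_{i+1}\cdots a_n a_1\cdots a_{i-1}$. For $\Gamma\in F(L)$, $u_\Gamma$ is the derivation of $L$ with $u_\Gamma(x)=\partial_y\Gamma$, $u_\Gamma(y)=-\partial_x\Gamma$. For $l\in A$, $\partial^L_{x_0}(l)=\sum\partial^1\,\epsilon(\partial^2)\in A$, where $\sum\partial^1\otimes\partial^2$ is the sum over occurrences of $x_0$ in monomials of (prefix)$\otimes$(suffix) and $\epsilon$ is the constant term. $\operatorname{div}(u)=\operatorname{tr}(\partial^L_x(u(x))+\partial^L_y(u(y)))$, and $\mathfrak{krv}=\{u\in\operatorname{Der}(L):u([x,y])=0,\ \operatorname{div}(u)=0\}$. *)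

theory Defs
  imports Complex_Main "HOL-Library.Poly_Mapping"
begin

datatype gen = X | Y

datatype word = Word (letters: "gen list")

instantiation word :: monoid_add
begin
definition zero_word :: word where "zero_word = Word []"
definition plus_word :: "word \<Rightarrow> word \<Rightarrow> word" where
  "plus_word u v = Word (letters u @ letters v)"
instance by standard (auto simp: zero_word_def plus_word_def)
end

(* A = R<x,y>: finitely supported real coefficient functions on words,
   with the convolution (concatenation) product from Poly_Mapping *)
type_synonym A = "word \<Rightarrow>\<^sub>0 real"

definition wd :: "gen list \<Rightarrow> A" where
  "wd w = Poly_Mapping.single (Word w) 1"

definition gn :: "gen \<Rightarrow> A" where
  "gn g = wd [g]"

definition smult :: "real \<Rightarrow> A \<Rightarrow> A" where
  "smult c a = Poly_Mapping.single 0 c * a"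

definition lin_ext :: "(gen list \<Rightarrow> A) \<Rightarrow> A \<Rightarrow> A" where
  "lin_ext f a = (\<Sum>w\<in>Poly_Mapping.keys a. smult (Poly_Mapping.lookup a w) (f (letters w)))"

definition bracket :: "A \<Rightarrow> A \<Rightarrow> A" where
  "bracket a b = a * b - b * a"

(* the free Lie algebra L \<subseteq> A: Lie subalgebra generated by x, y *)
inductive_set freeLie :: "A set" where
  gen: "gn g \<in> freeLie"
| add: "a \<in> freeLie \<Longrightarrow> b \<in> freeLie \<Longrightarrow> a + b \<in> freeLie"
| scal: "a \<in> freeLie \<Longrightarrow> smult c a \<in> freeLie"
| brk: "a \<in> freeLie \<Longrightarrow> b \<in> freeLie \<Longrightarrow> bracket a b \<in> freeLie"

definition ad :: "A \<Rightarrow> A \<Rightarrow> A" where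
  "ad y l = bracket y l"

(* span{ab - ba}; tr z = 0 in A/span{ab-ba} iff z belongs to this set *)
inductive_set comm_span :: "A set" where
  zero: "0 \<in> comm_span"
| comm: "a * b - b * a \<in> comm_span"
| add: "a \<in> comm_span \<Longrightarrow> b \<in> comm_span \<Longrightarrow> a + b \<in> comm_span"
| scal: "a \<in> comm_span \<Longrightarrow> smult c a \<in> comm_span"

definition tr_zero :: "A \<Rightarrow> bool" where
  "tr_zero a \<longleftrightarrow> a \<in> comm_span"

(* cyclic derivative: tr(a_1...a_n) \<mapsto> \<Sum>_{a_i = x0} a_{i+1}...a_n a_1...a_{i-1};
   defined on representatives in A (it is well defined on A/span{ab-ba}) *)
definition cyc_partial :: "gen \<Rightarrow> A \<Rightarrow> A" where
  "cyc_partial x0 = lin_ext (\<lambda>w. \<Sum>i\<in>{i. i < length w \<and> w ! i = x0}.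
                                 wd (drop (Suc i) w @ take i w))"

definition eps :: "A \<Rightarrow> real" where
  "eps a = Poly_Mapping.lookup a 0"

(* \<partial>^L_{x0}(l) = \<Sum> \<partial>^1 \<epsilon>(\<partial>^2) *)
definition lie_partial :: "gen \<Rightarrow> A \<Rightarrow> A" where
  "lie_partial x0 = lin_ext (\<lambda>w. \<Sum>i\<in>{i. i < length w \<and> w ! i = x0}.
                                 smult (eps (wd (drop (Suc i) w))) (wd (take i w)))"

definition der_ext :: "A \<Rightarrow> A \<Rightarrow> A \<Rightarrow> A" where
  "der_ext a b = lin_ext (\<lambda>w. \<Sum>i<length w.
       wd (take i w) * (if w ! i = X then a else b) * wd (drop (Suc i) w))"

definition u_of :: "A \<Rightarrow> A \<Rightarrow> A" where
  "u_of \<Gamma> = der_ext (cyc_partial Y \<Gamma>) (- cyc_partial X \<Gamma>)"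

definition is_Der_L :: "(A \<Rightarrow> A) \<Rightarrow> bool" where
  "is_Der_L u \<longleftrightarrow>
     (\<forall>l\<in>freeLie. u l \<in> freeLie) \<and>
     (\<forall>a\<in>freeLie. \<forall>b\<in>freeLie. u (a + b) = u a + u b) \<and>
     (\<forall>a\<in>freeLie. \<forall>c. u (smult c a) = smult c (u a)) \<and>
     (\<forall>a\<in>freeLie. \<forall>b\<in>freeLie. u (bracket a b) = bracket (u a) b + bracket a (u b))"

(* div(u) = tr(\<partial>^L_x(u x) + \<partial>^L_y(u y)), recorded by its representative in A *)
definition div_rep :: "(A \<Rightarrow> A) \<Rightarrow> A" where
  "div_rep u = lie_partial X (u (gn X)) + lie_partial Y (u (gn Y))"

definition krv :: "(A \<Rightarrow> A) set" where
  "krv = {u. is_Der_L u \<and> u (bracket (gn X) (gn Y)) = 0 \<and> tr_zero (div_rep u)}"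

(* \<delta>_{2n} = \<Theta>(x \<otimes> ad_y^{2n}(x)), regarded in A/span{ab-ba} as tr(x ad_y^{2n}(x));
   here given by the representative x * ad_y^{2n}(x) \<in> A *)
definition delta :: "nat \<Rightarrow> A" where
  "delta n = gn X * ((ad (gn Y)) ^^ (2 * n)) (gn X)"

end

theory Submission
  imports Defs
begin


abbreviation sg :: "word \<Rightarrow> real \<Rightarrow> A" where "sg \<equiv> Poly_Mapping.single"
abbreviation lk :: "A \<Rightarrow> word \<Rightarrow> real" where "lk \<equiv> Poly_Mapping.lookup"
abbreviation ks :: "A \<Rightarrow> word set" where "ks \<equiv> Poly_Mapping.keys"

lemma expansion: "(a::A) = (\<Sum>k\<in>ks a. sg k (lk a k))"
proof -
  have *: "finite I \<Longrightarrow> lk (\<Sum>k\<in>I. sg k (lk a k)) j = (if j \<in> I then lk a j else 0)" for I j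
    by (induction I rule: finite_induct) (auto simp: lookup_single lookup_add when_def)
  show ?thesis
    by (rule poly_mapping_eqI) (fastforce simp add: in_keys_iff *)
qed

lemma A_induct[case_names zero single add]:
  assumes "P 0" "\<And>k c. P (sg k c)" "\<And>a b. P a \<Longrightarrow> P b \<Longrightarrow> P (a + b)"
  shows "P (a::A)"
proof -
  have "finite I \<Longrightarrow> P (\<Sum>k\<in>I. sg k (lk a k))" for I
    by (induction I rule: finite_induct) (auto intro: assms)
  then show ?thesis by (subst expansion) simp
qed

lemma word_plus: "Word u + Word v = Word (u @ v)" by (simp add: plus_word_def)
lemma word_plus': "k + l = Word (letters k @ letters l)" by (simp add: plus_word_def)

lemma wd_append: "wd (u @ v) = wd u * wd v"
  by (simp add: wd_def mult_single word_plus)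
lemma wd_Nil: "wd [] = 1"
  by (simp add: wd_def zero_word_def[symmetric])
lemma wd_Cons: "wd (g # w) = gn g * wd w"
  using wd_append[of "[g]" w] by (simp add: gn_def)
lemma wd_snoc: "wd (w @ [g]) = wd w * gn g"
  by (simp add: wd_append gn_def)

lemma sg_smult: "sg k c = smult c (wd (letters k))"
  by (simp add: smult_def wd_def mult_single)

lemma central: "sg 0 c * a = a * sg 0 c"
proof (induction a rule: A_induct)
  case (single k d) then show ?case by (simp add: mult_single mult.commute)
qed (auto simp: distrib_left distrib_right)

lemma smult_add: "smult c (a + b) = smult c a + smult c b"
  by (simp add: smult_def distrib_left)
lemma smult_zero[simp]: "smult c 0 = 0" by (simp add: smult_def)
lemma smult_zero_left[simp]: "smult 0 a = 0" by (simp add: smult_def)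
lemma smult_one[simp]: "smult 1 a = a" by (simp add: smult_def)
lemma smult_neg: "smult (-1) a = - a" by (simp add: smult_def single_uminus)
lemma smult_mult_left: "smult c (a * b) = smult c a * b"
  by (simp add: smult_def mult.assoc)
lemma smult_mult_right: "smult c (a * b) = a * smult c b"
  by (metis smult_def mult.assoc central)
lemma smult_smult: "smult c (smult d a) = smult (c * d) a"
  by (simp add: smult_def mult.assoc[symmetric] mult_single)
lemma smult_uminus: "smult c (- a) = - smult c a" by (simp add: smult_def)
lemma smult_diff: "smult c (a - b) = smult c a - smult c b" by (simp add: smult_def right_diff_distrib)
lemma smult_sum: "smult c (sum f I) = (\<Sum>i\<in>I. smult c (f i))"
  by (simp add: smult_def sum_distrib_left)

lemma lin_ext_superset:
  assumes "finite S" "ks a \<subseteq> S"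
  shows "lin_ext f a = (\<Sum>w\<in>S. smult (lk a w) (f (letters w)))"
  unfolding lin_ext_def
  by (rule sum.mono_neutral_left) (use assms in \<open>auto simp: in_keys_iff\<close>)

lemma lin_ext_add: "lin_ext f (a + b) = lin_ext f a + lin_ext f b"
proof -
  let ?S = "ks a \<union> ks b"
  have "lin_ext f (a+b) = (\<Sum>w\<in>?S. smult (lk (a+b) w) (f (letters w)))"
    by (rule lin_ext_superset) (auto simp: keys_add)
  also have "\<dots> = (\<Sum>w\<in>?S. smult (lk a w) (f (letters w))) + (\<Sum>w\<in>?S. smult (lk b w) (f (letters w)))"
    by (simp add: lookup_add smult_def single_add distrib_right sum.distrib)
  also have "\<dots> = lin_ext f a + lin_ext f b"
    using lin_ext_superset[of ?S a f] lin_ext_superset[of ?S b f] by simp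
  finally show ?thesis .
qed

lemma lin_ext_zero[simp]: "lin_ext f 0 = 0" by (simp add: lin_ext_def)

lemma lin_ext_single: "lin_ext f (sg k c) = smult c (f (letters k))"
  by (simp add: lin_ext_def)

lemma lin_ext_wd: "lin_ext f (wd w) = f w"
  by (simp add: wd_def lin_ext_single)

lemma lin_ext_uminus: "lin_ext f (- a) = - lin_ext f a"
  by (metis add.right_inverse add_eq_0_iff lin_ext_add lin_ext_zero)

lemma lin_ext_diff: "lin_ext f (a - b) = lin_ext f a - lin_ext f b"
  by (simp add: diff_conv_add_uminus lin_ext_add lin_ext_uminus del: add_uminus_conv_diff)

lemma lin_ext_smult: "lin_ext f (smult c a) = smult c (lin_ext f a)"
proof (induction a rule: A_induct)
  case (single k d)
  have "smult c (sg k d) = sg k (c*d)" by (simp add: smult_def mult_single)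
  then show ?case by (simp add: lin_ext_single smult_smult)
next
  case (add a b) then show ?case by (simp add: smult_add lin_ext_add)
qed simp

lemma lin_ext_sum: "lin_ext f (sum g I) = (\<Sum>i\<in>I. lin_ext f (g i))"
  by (induction I rule: infinite_finite_induct) (auto simp: lin_ext_add)



lemma sum_filter: "(\<Sum>i\<in>{i. i < (n::nat) \<and> P i}. f i) = (\<Sum>i<n. if P i then f i else 0)"
proof -
  have "{i. i < n \<and> P i} = {x\<in>{..<n}. P x}" by auto
  then show ?thesis using sum.inter_filter[of "{..<n}" f P] by simp
qed

lemma smult_pull1: "smult c a * b = smult c (a * b)"
  by (simp add: smult_mult_left)
lemma smult_pull2: "a * smult c b = smult c (a * b)"
  by (simp add: smult_mult_right)
lemmas smult_pull = smult_pull1 smult_pull2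

lemma der_Nil: "der_ext a b (wd []) = 0"
  by (simp add: der_ext_def lin_ext_wd)

lemma der_Cons: "der_ext a b (wd (h # w)) = (if h = X then a else b) * wd w + gn h * der_ext a b (wd w)"
  unfolding der_ext_def lin_ext_wd
  apply (simp only: length_Cons sum.lessThan_Suc_shift)
  by (simp add: wd_Cons sum_distrib_left mult.assoc wd_Nil)

lemma der_one: "der_ext a b 1 = 0"
  using der_Nil wd_Nil by metis

lemma der_append: "der_ext a b (wd (u @ v)) = der_ext a b (wd u) * wd v + wd u * der_ext a b (wd v)"
proof (induction u)
  case Nil then show ?case by (simp add: wd_Nil der_one)
next
  case (Cons h u)
  have "der_ext a b (wd ((h # u) @ v)) = (if h = X then a else b) * wd (u @ v) + gn h * der_ext a b (wd (u @ v))"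
    by (simp only: append_Cons der_Cons)
  also have "\<dots> = der_ext a b (wd (h # u)) * wd v + wd (h # u) * der_ext a b (wd v)"
    by (simp only: Cons der_Cons) (simp add: wd_Cons wd_append algebra_simps)
  finally show ?case .
qed

lemma der_single: "der_ext a b (sg k c) = smult c (der_ext a b (wd (letters k)))"
  by (simp add: der_ext_def lin_ext_single lin_ext_wd)

lemma der_add: "der_ext a b (p + q) = der_ext a b p + der_ext a b q"
  by (simp add: der_ext_def lin_ext_add)

lemma der_zero[simp]: "der_ext a b 0 = 0"
  by (simp add: der_ext_def)

lemma der_smult: "der_ext a b (smult c p) = smult c (der_ext a b p)"
  by (simp add: der_ext_def lin_ext_smult)

lemma der_mult: "der_ext a b (p * q) = der_ext a b p * q + p * der_ext a b q"
proof (induction p rule: A_induct)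
  case (single k c)
  show ?case
  proof (induction q rule: A_induct)
    case (single l d)
    have "sg k c * sg l d = sg (Word (letters k @ letters l)) (c * d)"
      by (simp add: mult_single word_plus')
    then show ?case
      by (simp add: der_smult der_append sg_smult smult_pull smult_smult smult_add mult.commute)
  qed (simp_all add: der_add algebra_simps)
qed (simp_all add: der_add algebra_simps)

lemma der_uminus: "der_ext a b (- p) = - der_ext a b p"
  by (simp add: der_ext_def lin_ext_uminus)
lemma der_diff: "der_ext a b (p - q) = der_ext a b p - der_ext a b q"
  by (simp add: der_ext_def lin_ext_diff)
lemma der_gn: "der_ext a b (gn h) = (if h = X then a else b)"
  by (simp add: gn_def der_Cons der_Nil wd_Nil der_one)

lemma der_bracket: "der_ext a b (bracket p q) = bracket (der_ext a b p) q + bracket p (der_ext a b q)"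
  by (simp add: bracket_def der_diff der_mult algebra_simps)


definition Rg :: "gen \<Rightarrow> A \<Rightarrow> A \<Rightarrow> A" where
  "Rg g U V = lin_ext (\<lambda>w. \<Sum>i\<in>{i. i < length w \<and> w ! i = g}. wd (drop (Suc i) w) * V * wd (take i w)) U"

lemma Rg_wd: "Rg g (wd w) V = (\<Sum>i<length w. if w ! i = g then wd (drop (Suc i) w) * V * wd (take i w) else 0)"
  by (simp add: Rg_def lin_ext_wd sum_filter)

lemma Rg_Nil: "Rg g (wd []) V = 0"
  by (simp add: Rg_wd)

lemma Rg_Cons: "Rg g (wd (h # w)) V = (if h = g then wd w * V else 0) + Rg g (wd w) (V * gn h)"
  unfolding Rg_wd
  apply (simp only: length_Cons sum.lessThan_Suc_shift)
  by (simp add: wd_Cons mult.assoc wd_Nil drop_Suc_Cons take_Suc_Cons del: drop_Suc cong: if_cong)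

lemma Rg_add: "Rg g (p + q) V = Rg g p V + Rg g q V"
  by (simp add: Rg_def lin_ext_add)
lemma Rg_zero[simp]: "Rg g 0 V = 0"
  by (simp add: Rg_def)
lemma Rg_uminus: "Rg g (- p) V = - Rg g p V"
  by (simp add: Rg_def lin_ext_uminus)
lemma Rg_diff: "Rg g (p - q) V = Rg g p V - Rg g q V"
  by (simp add: Rg_def lin_ext_diff)
lemma Rg_single: "Rg g (sg k c) V = smult c (Rg g (wd (letters k)) V)"
  by (simp add: Rg_def lin_ext_single lin_ext_wd)

lemma Rg_wd_addV: "Rg g (wd w) (V1 + V2) = Rg g (wd w) V1 + Rg g (wd w) V2"
  by (simp add: Rg_wd algebra_simps sum.distrib[symmetric] if_distrib cong: if_cong)

lemma Rg_addV: "Rg g U (V1 + V2) = Rg g U V1 + Rg g U V2"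
  by (induction U rule: A_induct) (simp_all add: Rg_add Rg_single Rg_wd_addV smult_add algebra_simps)

lemma Rg_wd_smultV: "Rg g (wd w) (smult c V) = smult c (Rg g (wd w) V)"
  unfolding Rg_wd smult_sum
  by (rule sum.cong) (simp_all add: smult_pull)

lemma Rg_smultV: "Rg g U (smult c V) = smult c (Rg g U V)"
  by (induction U rule: A_induct) (simp_all add: Rg_add Rg_single Rg_wd_smultV smult_add smult_smult mult.commute)

lemma Rg_zeroV[simp]: "Rg g U 0 = 0"
  by (metis Rg_smultV smult_zero_left)

lemma Rg_uminusV: "Rg g U (- V) = - Rg g U V"
  by (metis Rg_smultV smult_neg)

lemma Rg_diffV: "Rg g U (V1 - V2) = Rg g U V1 - Rg g U V2"
  by (simp add: diff_conv_add_uminus Rg_addV Rg_uminusV del: add_uminus_conv_diff)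

lemma Rg_one: "Rg g 1 V = 0"
  using Rg_Nil wd_Nil by metis

lemma Rg_gn: "Rg g (gn h) V = (if h = g then V else 0)"
  by (simp add: gn_def Rg_Cons Rg_Nil wd_Nil Rg_one)

lemma Rg_smult: "Rg g (smult c U) V = smult c (Rg g U V)"
  by (simp add: Rg_def lin_ext_smult)

lemma Rg_append: "Rg g (wd (u @ v)) V = Rg g (wd u) (wd v * V) + Rg g (wd v) (V * wd u)"
proof (induction u arbitrary: V)
  case Nil then show ?case by (simp add: Rg_Nil wd_Nil Rg_one)
next
  case (Cons h u)
  show ?case
    by (simp only: append_Cons Rg_Cons Cons.IH) (simp add: wd_Cons wd_append mult.assoc)
qed

lemma Rg_mult: "Rg g (p * q) V = Rg g p (q * V) + Rg g q (V * p)"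
proof (induction p arbitrary: V rule: A_induct)
  case (single k c)
  show ?case
  proof (induction q arbitrary: V rule: A_induct)
    case (single l d)
    have "sg k c * sg l d = sg (Word (letters k @ letters l)) (c * d)"
      by (simp add: mult_single word_plus')
    then show ?case
      by (simp add: Rg_smult Rg_append sg_smult smult_pull Rg_smultV smult_smult smult_add mult.commute)
  qed (simp_all add: Rg_add Rg_addV algebra_simps)
qed (simp_all add: Rg_add Rg_addV algebra_simps)


lemma cyc_Rg: "cyc_partial g U = Rg g U 1"
  unfolding cyc_partial_def Rg_def by (simp add: wd_append)

definition cm :: "gen \<Rightarrow> A \<Rightarrow> A" where "cm g Z = gn g * Z - Z * gn g"

lemma cm_add: "cm g (a + b) = cm g a + cm g b"
  by (simp add: cm_def algebra_simps)

lemma Rg_comm_wd: "cm X (Rg X (wd w) V) + cm Y (Rg Y (wd w) V) = wd w * V - V * wd w"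
proof (induction w arbitrary: V)
  case Nil then show ?case by (simp add: Rg_Nil wd_Nil Rg_one cm_def)
next
  case (Cons h w)
  have "cm X (Rg X (wd (h # w)) V) + cm Y (Rg Y (wd (h # w)) V)
     = (cm X (if h = X then wd w * V else 0) + cm Y (if h = Y then wd w * V else 0))
       + (cm X (Rg X (wd w) (V * gn h)) + cm Y (Rg Y (wd w) (V * gn h)))"
    by (simp only: Rg_Cons cm_add add_ac)
  also have "\<dots> = cm h (wd w * V) + (wd w * (V * gn h) - V * gn h * wd w)"
    by (simp only: Cons.IH) (cases h, simp_all add: cm_def)
  also have "\<dots> = wd (h # w) * V - V * wd (h # w)"
    by (simp add: cm_def wd_Cons algebra_simps)
  finally show ?case .
qed

lemma Rg_comm: "cm X (Rg X U V) + cm Y (Rg Y U V) = U * V - V * U"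
proof (induction U rule: A_induct)
  case (single k c)
  let ?w = "wd (letters k)"
  have "cm X (Rg X (sg k c) V) + cm Y (Rg Y (sg k c) V)
     = smult c (cm X (Rg X ?w V) + cm Y (Rg Y ?w V))"
    by (simp only: cm_def Rg_single smult_pull smult_diff smult_add)
  also have "\<dots> = smult c (?w * V - V * ?w)" by (simp only: Rg_comm_wd)
  also have "\<dots> = sg k c * V - V * sg k c" by (simp only: sg_smult smult_pull smult_diff)
  finally show ?case .
next
  case (add a b)
  have "cm X (Rg X (a + b) V) + cm Y (Rg Y (a + b) V) = (cm X (Rg X a V) + cm Y (Rg Y a V)) + (cm X (Rg X b V) + cm Y (Rg Y b V))"
    by (simp add: Rg_add cm_add add_ac)
  also have "\<dots> = (a * V - V * a) + (b * V - V * b)" by (simp only: add(1) add(2))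
  also have "\<dots> = (a + b) * V - V * (a + b)" by (simp add: algebra_simps)
  finally show ?case .
qed (simp add: cm_def)



lemma fl_zero: "0 \<in> freeLie"
  using freeLie.scal[OF freeLie.gen[of X], of 0] by simp
lemma fl_neg: "a \<in> freeLie \<Longrightarrow> - a \<in> freeLie"
  using freeLie.scal[of a "-1"] by (simp add: smult_neg)
lemma fl_diff: "a \<in> freeLie \<Longrightarrow> b \<in> freeLie \<Longrightarrow> a - b \<in> freeLie"
  using freeLie.add[OF _ fl_neg] by (simp add: diff_conv_add_uminus del: add_uminus_conv_diff)
lemma fl_sum: "(\<And>i. i \<in> I \<Longrightarrow> f i \<in> freeLie) \<Longrightarrow> sum f I \<in> freeLie"
  by (induction I rule: infinite_finite_induct) (auto simp: fl_zero intro: freeLie.add)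
lemma fl_sign: "a \<in> freeLie \<Longrightarrow> (-1) ^ i * a \<in> freeLie"
  by (cases "even i") (simp_all add: fl_neg)

lemma cs_neg: "a \<in> comm_span \<Longrightarrow> - a \<in> comm_span"
  using comm_span.scal[of a "-1"] by (simp add: smult_neg)
lemma cs_diff: "a \<in> comm_span \<Longrightarrow> b \<in> comm_span \<Longrightarrow> a - b \<in> comm_span"
  using comm_span.add[OF _ cs_neg] by (simp add: diff_conv_add_uminus del: add_uminus_conv_diff)
lemma cs_sum: "(\<And>i. i \<in> I \<Longrightarrow> f i \<in> comm_span) \<Longrightarrow> sum f I \<in> comm_span"
  by (induction I rule: infinite_finite_induct) (auto intro: comm_span.add comm_span.zero)
lemma cs_sign: "a \<in> comm_span \<Longrightarrow> (-1) ^ i * a \<in> comm_span"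
  by (cases "even i") (simp_all add: cs_neg)

definition aa :: "nat \<Rightarrow> A" where "aa k = (ad (gn Y) ^^ k) (gn X)"

lemma aa_0: "aa 0 = gn X" by (simp add: aa_def)
lemma aa_Suc: "aa (Suc k) = gn Y * aa k - aa k * gn Y"
  by (simp add: aa_def ad_def bracket_def)
lemma aa_Lie: "aa k \<in> freeLie"
  by (induction k) (simp_all add: aa_def ad_def freeLie.gen freeLie.brk)

lemma ad_Suc: "(ad (gn Y) ^^ Suc i) V = (ad (gn Y) ^^ i) (gn Y * V - V * gn Y)"
  by (simp add: funpow_Suc_right ad_def bracket_def del: funpow.simps)

lemma RgY_aa: "Rg Y (aa m) V = (\<Sum>i<m. (-1) ^ i * bracket (aa (m - 1 - i)) ((ad (gn Y) ^^ i) V))"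
proof (induction m arbitrary: V)
  case 0 then show ?case by (simp add: aa_0 Rg_gn)
next
  case (Suc m)
  have "Rg Y (aa (Suc m)) V = bracket (aa m) V - Rg Y (aa m) (gn Y * V - V * gn Y)"
    by (simp add: aa_Suc Rg_diff Rg_mult Rg_gn Rg_diffV bracket_def)
  also have "\<dots> = (\<Sum>i<Suc m. (-1) ^ i * bracket (aa (Suc m - 1 - i)) ((ad (gn Y) ^^ i) V))"
    by (simp only: Suc.IH sum.lessThan_Suc_shift ad_Suc) (simp add: sum_negf)
  finally show ?case .
qed

lemma RgX_aa: "Rg X (aa m) V = (-1) ^ m * (ad (gn Y) ^^ m) V"
proof (induction m arbitrary: V)
  case 0 then show ?case by (simp add: aa_0 Rg_gn)
next
  case (Suc m)
  have "Rg X (aa (Suc m)) V = - Rg X (aa m) (gn Y * V - V * gn Y)"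
    by (simp add: aa_Suc Rg_diff Rg_mult Rg_gn Rg_diffV)
  also have "\<dots> = (-1) ^ Suc m * (ad (gn Y) ^^ Suc m) V"
    by (simp only: Suc.IH ad_Suc) simp
  finally show ?case .
qed

lemma delta_aa: "delta n = gn X * aa (2 * n)" by (simp add: delta_def aa_def)

lemma cpY: "cyc_partial Y (delta n) = (\<Sum>i<2*n. (-1) ^ i * bracket (aa (2*n - 1 - i)) (aa i))"
  by (simp add: cyc_Rg delta_aa Rg_mult Rg_gn RgY_aa aa_def[symmetric])

lemma cpX: "cyc_partial X (delta n) = aa (2*n) + aa (2*n)"
  by (simp add: cyc_Rg delta_aa Rg_mult Rg_gn RgX_aa aa_def[symmetric])


lemma eps_wd: "eps (wd v) = (if v = [] then 1 else 0)"
  by (auto simp: eps_def wd_def lookup_single when_def zero_word_def)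

lemma lp_snoc: "lie_partial g (wd (w @ [h])) = (if h = g then wd w else 0)"
proof -
  have "lie_partial g (wd (w @ [h])) = (\<Sum>i<Suc (length w). if (w @ [h]) ! i = g then
      smult (eps (wd (drop (Suc i) (w @ [h])))) (wd (take i (w @ [h]))) else 0)"
    by (simp add: lie_partial_def lin_ext_wd sum_filter)
  also have "\<dots> = (\<Sum>i<length w. 0) + (if h = g then wd w else 0)"
    apply (simp only: sum.lessThan_Suc, rule arg_cong2[where f="(+)"])
     apply (rule sum.cong, simp)
     apply (auto simp: eps_wd drop_append nth_append)
    done
  finally show ?thesis by simp
qed

lemma lp_add: "lie_partial g (p + q) = lie_partial g p + lie_partial g q"
  by (simp add: lie_partial_def lin_ext_add)
lemma lp_zero[simp]: "lie_partial g 0 = 0"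
  by (simp add: lie_partial_def)
lemma lp_uminus: "lie_partial g (- p) = - lie_partial g p"
  by (simp add: lie_partial_def lin_ext_uminus)
lemma lp_diff: "lie_partial g (p - q) = lie_partial g p - lie_partial g q"
  by (simp add: lie_partial_def lin_ext_diff)
lemma lp_sum: "lie_partial g (sum f I) = (\<Sum>i\<in>I. lie_partial g (f i))"
  by (simp add: lie_partial_def lin_ext_sum)
lemma lp_sign: "lie_partial g ((-1) ^ i * p) = (-1) ^ i * lie_partial g p"
  by (cases "even i") (simp_all add: lp_uminus)

lemma lp_mult_gn: "lie_partial g (U * gn h) = (if h = g then U else 0)"
proof (induction U rule: A_induct)
  case (single k c)
  have sw: "smult c (wd w) = sg (Word w) c" for w
    by (simp add: smult_def wd_def mult_single)
  have "sg k c * gn h = sg (Word (letters k @ [h])) c"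
    by (simp add: gn_def wd_def mult_single word_plus')
  then have "sg k c * gn h = smult c (wd (letters k @ [h]))" by (simp add: sw)
  then show ?case
    by (simp add: lie_partial_def lin_ext_smult lp_snoc[unfolded lie_partial_def] sg_smult)
next
  case (add a b) then show ?case by (simp add: lp_add distrib_right)
qed simp

fun LL :: "nat \<Rightarrow> A" where
  "LL 0 = 0"
| "LL (Suc k) = gn Y * LL k - aa k"

lemma aa_decomp: "aa k = LL k * gn Y + gn Y ^ k * gn X"
proof (induction k)
  case 0 then show ?case by (simp add: aa_0)
next
  case (Suc k)
  have "aa (Suc k) = gn Y * (LL k * gn Y + gn Y ^ k * gn X) - aa k * gn Y"
    by (simp only: aa_Suc Suc.IH[symmetric])
  also have "\<dots> = LL (Suc k) * gn Y + gn Y ^ Suc k * gn X"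
    by (simp add: algebra_simps)
  finally show ?case .
qed

lemma lpX_aa: "lie_partial X (aa k) = gn Y ^ k"
  by (subst aa_decomp) (simp add: lp_add lp_mult_gn)
lemma lpY_aa: "lie_partial Y (aa k) = LL k"
  by (subst aa_decomp) (simp add: lp_add lp_mult_gn)

lemma lpX_br: "lie_partial X (bracket (aa j) (aa i)) = aa j * gn Y ^ i - aa i * gn Y ^ j"
proof -
  have "bracket (aa j) (aa i) = (aa j * LL i) * gn Y + (aa j * gn Y ^ i) * gn X
      - ((aa i * LL j) * gn Y + (aa i * gn Y ^ j) * gn X)"
    unfolding bracket_def
    by (subst (2) aa_decomp, subst (3) aa_decomp) (simp add: algebra_simps)
  then show ?thesis by (simp add: lp_add lp_diff lp_mult_gn)
qed

lemma cs_aa: "aa (Suc k) * gn Y ^ j \<in> comm_span"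
proof -
  have "aa (Suc k) * gn Y ^ j = gn Y * (aa k * gn Y ^ j) - (aa k * gn Y ^ j) * gn Y"
    by (simp add: aa_Suc algebra_simps power_commutes)
  then show ?thesis by (simp add: comm_span.comm)
qed

lemma cs_LL: "LL (Suc M) + gn X * gn Y ^ M \<in> comm_span"
proof -
  have "LL (Suc M) + gn X * gn Y ^ M = (gn Y * LL M - LL M * gn Y) + (gn X * gn Y ^ M - gn Y ^ M * gn X)
       + (LL M * gn Y + gn Y ^ M * gn X - aa M)"
    by (simp add: algebra_simps)
  moreover have "LL M * gn Y + gn Y ^ M * gn X - aa M = 0" using aa_decomp[of M] by simp
  ultimately have "LL (Suc M) + gn X * gn Y ^ M = (gn Y * LL M - LL M * gn Y) + (gn X * gn Y ^ M - gn Y ^ M * gn X)"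
    by simp
  then show ?thesis by (simp only:) (intro comm_span.add comm_span.comm)
qed


lemma div_part:
  "(\<Sum>i<m. (-1) ^ i * (aa (m - 1 - i) * gn Y ^ i - aa i * gn Y ^ (m - 1 - i))) - (LL m + LL m) \<in> comm_span"
  if "even m"
proof (cases m)
  case 0 then show ?thesis by (simp add: comm_span.zero)
next
  case (Suc M)
  with that have oddM: "odd M" by simp
  let ?x = "gn X" and ?y = "gn Y"
  define C1 where "C1 = (\<Sum>i<M. (-1) ^ i * (aa (M - i) * ?y ^ i))"
  define C2 where "C2 = (\<Sum>i<M. (-1) ^ Suc i * (aa (Suc i) * ?y ^ (M - Suc i)))"
  have C1: "C1 \<in> comm_span" unfolding C1_def
  proof (rule cs_sum, rule cs_sign)
    fix i assume "i \<in> {..<M}"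
    then have "M - i = Suc (M - i - 1)" by simp
    then show "aa (M - i) * ?y ^ i \<in> comm_span" by (metis cs_aa)
  qed
  have C2: "C2 \<in> comm_span" unfolding C2_def
    by (rule cs_sum, rule cs_sign, rule cs_aa)
  have "(\<Sum>i<m. (-1) ^ i * (aa (m - 1 - i) * ?y ^ i - aa i * ?y ^ (m - 1 - i)))
      = (\<Sum>i<Suc M. (-1) ^ i * (aa (M - i) * ?y ^ i)) - (\<Sum>i<Suc M. (-1) ^ i * (aa i * ?y ^ (M - i)))"
    by (simp add: Suc right_diff_distrib sum_subtractf)
  also have "(\<Sum>i<Suc M. (-1) ^ i * (aa (M - i) * ?y ^ i)) = C1 - ?x * ?y ^ M"
    using oddM by (simp add: C1_def aa_0)
  also have "(\<Sum>i<Suc M. (-1) ^ i * (aa i * ?y ^ (M - i))) = ?x * ?y ^ M + C2"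
    by (simp only: sum.lessThan_Suc_shift C2_def) (simp add: aa_0)
  finally have "(\<Sum>i<m. (-1) ^ i * (aa (m - 1 - i) * ?y ^ i - aa i * ?y ^ (m - 1 - i))) - (LL m + LL m)
     = (C1 - C2) - (LL (Suc M) + ?x * ?y ^ M) - (LL (Suc M) + ?x * ?y ^ M)"
    by (simp add: Suc algebra_simps)
  also have "\<dots> \<in> comm_span"
    by (intro cs_diff C1 C2 cs_LL)
  finally show ?thesis .
qed

theorem mainTheorem7:
  fixes n :: nat
  shows "u_of (delta n) \<in> krv"
proof -
  define cY where "cY = cyc_partial Y (delta n)"
  define cX where "cX = cyc_partial X (delta n)"
  have u: "u_of (delta n) = der_ext cY (- cX)" by (simp add: u_of_def cY_def cX_def)
  have cYL: "cY \<in> freeLie" unfolding cY_def cpY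
    by (intro fl_sum fl_sign freeLie.brk aa_Lie)
  have cXL: "- cX \<in> freeLie" unfolding cX_def cpX
    by (intro fl_neg freeLie.add aa_Lie)
  have mem: "der_ext cY (- cX) l \<in> freeLie" if "l \<in> freeLie" for l
    using that
  proof (induction rule: freeLie.induct)
    case (gen g) then show ?case using cYL cXL by (cases g) (simp_all add: der_gn)
  next
    case (add a b) then show ?case by (simp add: der_add freeLie.add)
  next
    case (scal a c) then show ?case by (simp add: der_smult freeLie.scal)
  next
    case (brk a b) then show ?case by (simp add: der_bracket freeLie.add freeLie.brk)
  qed
  have der: "is_Der_L (der_ext cY (- cX))"
    unfolding is_Der_L_def using mem by (simp add: der_add der_smult der_bracket)
  have "cm X cX + cm Y cY = 0"
    using Rg_comm[of "delta n" 1] by (simp add: cX_def cY_def cyc_Rg)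
  moreover have "der_ext cY (- cX) (bracket (gn X) (gn Y)) = bracket cY (gn Y) + bracket (gn X) (- cX)"
    by (simp add: der_bracket der_gn)
  ultimately have br: "der_ext cY (- cX) (bracket (gn X) (gn Y)) = 0"
    by (simp add: bracket_def cm_def algebra_simps)
  have "div_rep (der_ext cY (- cX)) =
     (\<Sum>i<2*n. (-1) ^ i * (aa (2*n - 1 - i) * gn Y ^ i - aa i * gn Y ^ (2*n - 1 - i))) - (LL (2*n) + LL (2*n))"
    by (simp add: div_rep_def der_gn cY_def cX_def cpY cpX lp_sum lp_sign lpX_br lp_uminus lp_add lp_diff lpY_aa)
  also have "\<dots> \<in> comm_span" by (rule div_part) simp
  finally have "tr_zero (div_rep (der_ext cY (- cX)))" by (simp add: tr_zero_def)
  then show ?thesis using der br u by (simp add: krv_def)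
qed


end
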